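(* Let $n\ge3$. Let $\mathbf{b}_0=10^{n-1}\in\{0,1\}^n$ and, for $1\le i\le\lceil n/2\rceil-1$, let $\mathbf{b}_i\in\{0,1\}^n$ have ones exactly in coordinates $2i$ and $2i+1$. Let $V_{\mathcal{B}}=\mathrm{span}_{\mathbb{F}_2}\{\mathbf{b}_0,\ldots,\mathbf{b}_{\lceil n/2\rceil-1}\}$. For $\mathbf{a}=(a_0,a_1,\ldots,a_{\lceil n/2\rceil-1})\in\{0,1\}^{\lceil n/2\rceil}$ and $\mathbf{s}=\sum_{i=0}^{\lceil n/2\rceil-1}a_i\mathbf{b}_i$ (sum over $\mathbb{F}_2^n$), \[ \widehat{\mathds{1}_{S_2}}(\mathbf{s})=2^{\lfloor n/2\rfloor-n}\cdot(-1)^{w(\mathbf{a})-a_0}. \] Moreover, $\widehat{\mathds{1}_{S_2}}(\mathbf{s})=0$ for all $\mathbf{s}\notin V_{\mathcal{B}}$.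
   Context: Fourier transform: $\widehat{f}(\mathbf{s})=2^{-n}\sum_{\mathbf{x}\in\{0,1\}^n}f(\mathbf{x})(-1)^{\mathbf{x}\cdot\mathbf{s}}$. $w(\cdot)$ is Hamming weight. $S_2\subseteq\{0,1\}^n$ (the 2-charge constraint) is the set of $\mathbf{x}\in\{0,1\}^n$ such that, with $y_i=(-1)^{x_i}$, every running sum satisfies $0\le\sum_{i=1}^r y_i\le 2$ for $1\le r\le n$. *)

theory Defs
  imports Complex_Main
begin

text \<open>Vectors in {0,1}^n are boolean lists of length n; coordinate i (1-based, 1 \<le> i \<le> n)
  is the list entry at index i - 1. True = 1, False = 0.\<close>

definition cube :: "nat \<Rightarrow> bool list set" where
  "cube n = {x. length x = n}"

definition spin :: "bool \<Rightarrow> int" where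
  "spin b = (if b then -1 else 1)"

definition S2 :: "nat \<Rightarrow> bool list set" where
  "S2 n = {x \<in> cube n. \<forall>r \<in> {1..n}. 0 \<le> (\<Sum>i<r. spin (x ! i)) \<and> (\<Sum>i<r. spin (x ! i)) \<le> 2}"

text \<open>Inner product x \<cdot> s over F_2, represented by the number of common ones (only parity matters).\<close>
definition dotc :: "nat \<Rightarrow> bool list \<Rightarrow> bool list \<Rightarrow> nat" where
  "dotc n x s = card {i. i < n \<and> x ! i \<and> s ! i}"

definition fourier :: "nat \<Rightarrow> (bool list \<Rightarrow> real) \<Rightarrow> bool list \<Rightarrow> real" where
  "fourier n f s = (1 / 2 ^ n) * (\<Sum>x \<in> cube n. f x * (-1) ^ dotc n x s)"

definition indS2 :: "nat \<Rightarrow> bool list \<Rightarrow> real" where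
  "indS2 n x = (if x \<in> S2 n then 1 else 0)"

definition wt :: "bool list \<Rightarrow> nat" where
  "wt a = length (filter id a)"

definition halfc :: "nat \<Rightarrow> nat" where
  "halfc n = nat \<lceil>real n / 2\<rceil>"

text \<open>Basis vectors: b_0 = 10^{n-1} (one exactly in coordinate 1);
  for i \<ge> 1, b_i has ones exactly in coordinates 2i and 2i+1 (list indices 2i-1 and 2i).\<close>
definition bvec :: "nat \<Rightarrow> nat \<Rightarrow> bool list" where
  "bvec n i = map (\<lambda>j. if i = 0 then j = 0 else (j = 2*i - 1 \<or> j = 2*i)) [0..<n]"

definition comb :: "nat \<Rightarrow> bool list \<Rightarrow> bool list" where
  "comb n a = map (\<lambda>j. odd (card {i. i < length a \<and> a ! i \<and> bvec n i ! j})) [0..<n]"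

definition VB :: "nat \<Rightarrow> bool list set" where
  "VB n = {comb n a | a. length a = halfc n}"

end

theory Submission
  imports Defs
begin

fun FF :: "int \<Rightarrow> bool list \<Rightarrow> real" where
  "FF c [] = 1"
| "FF c (t # s) = (\<Sum>b\<in>UNIV. if 0 \<le> c + spin b \<and> c + spin b \<le> 2
        then (-1) ^ (if b \<and> t then 1 else 0) * FF (c + spin b) s else 0)"

fun paired :: "bool list \<Rightarrow> bool" where
  "paired [] = True"
| "paired [t] = (\<not> t)"
| "paired (t # u # r) = (t = u \<and> paired r)"

fun sg :: "bool list \<Rightarrow> nat" where
  "sg [] = 0"
| "sg [t] = 0"
| "sg (t # u # r) = (if t then 1 else 0) + sg r"

lemma FF_step: "FF c (t # s) = (if 0 \<le> c + 1 \<and> c + 1 \<le> 2 then FF (c+1) s else 0)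
   + (if 0 \<le> c - 1 \<and> c - 1 \<le> 2 then (if t then -1 else 1) * FF (c - 1) s else 0)"
  by (simp add: UNIV_bool spin_def)

declare FF.simps(2)[simp del]

lemma FF1: "FF 1 r = (if paired r then 2 ^ ((length r + 1) div 2) * (-1) ^ sg r else 0)"
proof (induction r rule: paired.induct)
  case 1 show ?case by simp
next
  case (2 t) show ?case by (simp add: FF_step)
next
  case (3 t u r)
  have "FF 1 (t#u#r) = ((if u then -1 else 1) + (if t then -1 else 1)) * FF 1 r"
    by (simp add: FF_step algebra_simps)
  then show ?case using 3 by auto
qed

lemma cube_Suc: "cube (Suc m) = (\<lambda>(b,x). b#x) ` (UNIV \<times> cube m)"
  by (auto simp: cube_def length_Suc_conv image_iff)

lemma finite_cube: "finite (cube m)"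
proof -
  have "cube m = {xs. set xs \<subseteq> (UNIV::bool set) \<and> length xs = m}" by (simp add: cube_def)
  then show ?thesis using finite_lists_length_eq[OF finite_UNIV] by simp
qed

lemma ivl_Suc: "{1..Suc m} = insert (Suc 0) (Suc ` {1..m})"
  by (auto simp: image_iff)

lemma cond_Cons: "(\<forall>r\<in>{1..Suc m}. 0 \<le> c + (\<Sum>i<r. spin ((b#x)!i)) \<and> c + (\<Sum>i<r. spin ((b#x)!i)) \<le> 2)
  = (0 \<le> c + spin b \<and> c + spin b \<le> 2 \<and> (\<forall>r\<in>{1..m}. 0 \<le> (c + spin b) + (\<Sum>i<r. spin (x!i)) \<and> (c + spin b) + (\<Sum>i<r. spin (x!i)) \<le> 2))"
proof -
  have sums: "\<And>r. (\<Sum>i<Suc r. spin ((b#x)!i)) = spin b + (\<Sum>i<r. spin (x!i))"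
    by (simp only: sum.lessThan_Suc_shift nth_Cons_0 nth_Cons_Suc)
  show ?thesis unfolding ivl_Suc ball_simps(7,9) sums by (simp add: add.assoc)
qed

lemma dotc_Cons: "dotc (Suc m) (b#x) (t#s) = (if b \<and> t then 1 else 0) + dotc m x s"
proof -
  have eq: "{i. i < Suc m \<and> (b#x)!i \<and> (t#s)!i} = (if b \<and> t then {0} else {}) \<union> Suc ` {i. i<m \<and> x!i \<and> s!i}"
  proof (rule set_eqI)
    fix i show "i \<in> {i. i < Suc m \<and> (b#x)!i \<and> (t#s)!i} \<longleftrightarrow> i \<in> (if b \<and> t then {0} else {}) \<union> Suc ` {i. i<m \<and> x!i \<and> s!i}"
      by (cases i) (auto simp: image_iff)
  qed
  have "card {i. i < Suc m \<and> (b#x)!i \<and> (t#s)!i} = card (if b \<and> t then {0::nat} else {}) + card (Suc ` {i. i<m \<and> x!i \<and> s!i})"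
    unfolding eq by (rule card_Un_disjoint) auto
  also have "card (Suc ` {i. i<m \<and> x!i \<and> s!i}) = card {i. i<m \<and> x!i \<and> s!i}"
    by (rule card_image) auto
  finally show ?thesis by (simp add: dotc_def)
qed

lemma key: "length s = m \<Longrightarrow> (\<Sum>x\<in>cube m. (if \<forall>r\<in>{1..m}. 0 \<le> c + (\<Sum>i<r. spin (x!i)) \<and> c + (\<Sum>i<r. spin (x!i)) \<le> 2 then 1 else 0) * (-1::real)^(dotc m x s)) = FF c s"
proof (induction s arbitrary: c m)
  case Nil
  have "cube 0 = {[]}" by (auto simp: cube_def)
  then show ?case using Nil by (simp add: dotc_def)
next
  case (Cons t s)
  then obtain m' where m: "m = Suc m'" "length s = m'" by auto
  define g where "g x = (if \<forall>r\<in>{1..m}. 0 \<le> c + (\<Sum>i<r. spin (x!i)) \<and> c + (\<Sum>i<r. spin (x!i)) \<le> 2 then 1 else 0) * (-1::real)^(dotc m x (t#s))" for x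
  have inner: "(\<Sum>x\<in>cube m'. g (b#x)) = (if 0 \<le> c + spin b \<and> c + spin b \<le> 2
        then (-1) ^ (if b \<and> t then 1 else 0) * FF (c + spin b) s else 0)" for b
  proof (cases "0 \<le> c + spin b \<and> c + spin b \<le> 2")
    case True
    have "(\<Sum>x\<in>cube m'. g (b#x)) = (\<Sum>x\<in>cube m'. (-1) ^ (if b \<and> t then 1 else 0) *
       ((if \<forall>r\<in>{1..m'}. 0 \<le> (c + spin b) + (\<Sum>i<r. spin (x!i)) \<and> (c + spin b) + (\<Sum>i<r. spin (x!i)) \<le> 2 then 1 else 0) * (-1::real)^(dotc m' x s)))"
    proof (rule sum.cong[OF refl])
      fix x show "g (b#x) = (-1) ^ (if b \<and> t then 1 else 0) *
       ((if \<forall>r\<in>{1..m'}. 0 \<le> (c + spin b) + (\<Sum>i<r. spin (x!i)) \<and> (c + spin b) + (\<Sum>i<r. spin (x!i)) \<le> 2 then 1 else 0) * (-1::real)^(dotc m' x s))"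
        unfolding g_def m(1) cond_Cons dotc_Cons power_add using True by simp
    qed
    also have "\<dots> = (-1) ^ (if b \<and> t then 1 else 0) * FF (c + spin b) s"
      by (simp only: sum_distrib_left[symmetric] Cons.IH[OF m(2)])
    finally show ?thesis using True by simp
  next
    case False
    have z: "g (b#x) = 0" for x unfolding g_def m(1) cond_Cons using False by auto
    then show ?thesis using False by auto
  qed
  have "(\<Sum>x\<in>cube m. g x) = (\<Sum>p\<in>UNIV \<times> cube m'. g (fst p # snd p))"
    unfolding m(1) cube_Suc
    by (subst sum.reindex) (auto simp: inj_on_def case_prod_beta)
  also have "\<dots> = (\<Sum>b\<in>UNIV. \<Sum>x\<in>cube m'. g (b#x))"
    unfolding sum.cartesian_product by (simp add: case_prod_beta)
  also have "\<dots> = FF c (t#s)" by (simp only: inner FF.simps(2))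
  finally show ?case unfolding g_def by simp
qed

lemma fourier_eq:
  assumes "s \<in> cube n" "n \<ge> 1"
  shows "fourier n (indS2 n) s = FF 1 (tl s) / 2^n"
proof -
  have "(\<Sum>x\<in>cube n. indS2 n x * (-1) ^ dotc n x s) =
     (\<Sum>x\<in>cube n. (if \<forall>r\<in>{1..n}. 0 \<le> 0 + (\<Sum>i<r. spin (x!i)) \<and> 0 + (\<Sum>i<r. spin (x!i)) \<le> 2 then 1 else 0) * (-1::real)^(dotc n x s))"
    by (rule sum.cong) (auto simp: indS2_def S2_def)
  also have "\<dots> = FF 0 s" using assms(1) by (intro key) (simp add: cube_def)
  also have "\<dots> = FF 1 (tl s)"
  proof -
    obtain t s' where "s = t # s'" using assms by (cases s) (auto simp: cube_def)
    then show ?thesis by (simp add: FF_step)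
  qed
  finally show ?thesis by (simp add: fourier_def)
qed

lemma halfc_eq: "halfc n = (n + 1) div 2"
proof -
  have "\<lceil>real n / 2\<rceil> = int ((n+1) div 2)"
  proof (rule ceiling_unique)
    show "real n / 2 \<le> real_of_int (int ((n + 1) div 2))"
      by (cases "even n") (auto elim!: evenE oddE)
    show "real_of_int (int ((n + 1) div 2)) - 1 < real n / 2"
      by (cases "even n") (auto elim!: evenE oddE)
  qed
  then show ?thesis by (simp add: halfc_def)
qed

lemma paired_iff: "paired r \<longleftrightarrow> (\<forall>j. 2*j+1 < length r \<longrightarrow> r!(2*j) = r!(2*j+1)) \<and> (odd (length r) \<longrightarrow> \<not> r!(length r - 1))"
proof (induction r rule: paired.induct)
  case 1 then show ?case by simp
next
  case (2 t) then show ?case by simp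
next
  case (3 t u r)
  have A: "(\<forall>j. 2*j+1 < length (t#u#r) \<longrightarrow> (t#u#r)!(2*j) = (t#u#r)!(2*j+1)) \<longleftrightarrow>
        t = u \<and> (\<forall>j. 2*j+1 < length r \<longrightarrow> r!(2*j) = r!(2*j+1))"
  proof
    assume H: "\<forall>j. 2*j+1 < length (t#u#r) \<longrightarrow> (t#u#r)!(2*j) = (t#u#r)!(2*j+1)"
    have "t = u" using H[rule_format, of 0] by simp
    moreover have "r!(2*j) = r!(2*j+1)" if "2*j+1 < length r" for j
      using H[rule_format, of "Suc j"] that by simp
    ultimately show "t = u \<and> (\<forall>j. 2*j+1 < length r \<longrightarrow> r!(2*j) = r!(2*j+1))" by blast
  next
    assume H: "t = u \<and> (\<forall>j. 2*j+1 < length r \<longrightarrow> r!(2*j) = r!(2*j+1))"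
    show "\<forall>j. 2*j+1 < length (t#u#r) \<longrightarrow> (t#u#r)!(2*j) = (t#u#r)!(2*j+1)"
    proof (intro allI impI)
      fix j assume j: "2*j+1 < length (t#u#r)"
      show "(t#u#r)!(2*j) = (t#u#r)!(2*j+1)"
      proof (cases j)
        case 0 then show ?thesis using H by simp
      next
        case (Suc k) then show ?thesis using H j by simp
      qed
    qed
  qed
  have B: "(odd (length (t#u#r)) \<longrightarrow> \<not> (t#u#r)!(length (t#u#r) - 1)) \<longleftrightarrow> (odd (length r) \<longrightarrow> \<not> r!(length r - 1))"
    by (cases r) auto
  show ?case unfolding A B using 3 by simp
qed

lemma sg_sum: "sg r = (\<Sum>j < length r div 2. if r!(2*j) then 1 else 0)"
proof (induction r rule: sg.induct)
  case (3 t u r)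
  have "length (t#u#r) div 2 = Suc (length r div 2)" by simp
  then show ?case using 3 by (simp only: sum.lessThan_Suc_shift) simp
qed auto

lemma wt_sum: "wt a = (\<Sum>i<length a. if a!i then 1 else 0)"
proof (induction a)
  case Nil then show ?case by (simp add: wt_def)
next
  case (Cons x a) then show ?case by (simp only: sum.lessThan_Suc_shift length_Cons) (simp add: wt_def)
qed

lemma comb_nth:
  assumes "j < n" "length a = (n+1) div 2"
  shows "comb n a ! j = (if j = 0 then a!0 else (j+1) div 2 < length a \<and> a!((j+1) div 2))"
proof -
  have "comb n a ! j = odd (card {i. i < length a \<and> a!i \<and> (if i = 0 then j = 0 else (j = 2*i - 1 \<or> j = 2*i))})"
    using assms(1) by (simp add: comb_def bvec_def)
  also have "{i. i < length a \<and> a!i \<and> (if i = 0 then j = 0 else (j = 2*i - 1 \<or> j = 2*i))}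
     = (if j = 0 then (if 0 < length a \<and> a!0 then {0} else {}) else (if (j+1) div 2 < length a \<and> a!((j+1) div 2) then {(j+1) div 2} else {}))"
  proof (rule set_eqI)
    fix i
    have e: "i \<noteq> 0 \<Longrightarrow> (j = 2*i - 1 \<or> j = 2*i) \<longleftrightarrow> (j \<noteq> 0 \<and> i = (j+1) div 2)" by presburger
    show "i \<in> {i. i < length a \<and> a!i \<and> (if i = 0 then j = 0 else (j = 2*i - 1 \<or> j = 2*i))} \<longleftrightarrow>
      i \<in> (if j = 0 then (if 0 < length a \<and> a!0 then {0} else {}) else (if (j+1) div 2 < length a \<and> a!((j+1) div 2) then {(j+1) div 2} else {}))"
      using e by (cases "i = 0") auto
  qed
  finally show ?thesis using assms by auto
qed


theorem mainTheorem10: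
  fixes n :: nat
  assumes "n \<ge> 3"
  shows "(\<forall>a. length a = halfc n \<longrightarrow>
            fourier n (indS2 n) (comb n a)
              = (2::real) powr (real (n div 2) - real n) * (-1) ^ (wt a - (if a ! 0 then 1 else 0)))
       \<and> (\<forall>s \<in> cube n. s \<notin> VB n \<longrightarrow> fourier n (indS2 n) s = 0)"
proof (intro conjI allI impI ballI)
  fix a :: "bool list"
  assume "length a = halfc n"
  then have La: "length a = (n+1) div 2" by (simp add: halfc_eq)
  define s where "s = comb n a"
  have ls: "length s = n" by (simp add: s_def comb_def)
  have sn: "s ! j = (if j = 0 then a!0 else (j+1) div 2 < length a \<and> a!((j+1) div 2))" if "j < n" for j
    unfolding s_def using comb_nth[OF that La] .
  have pr: "paired (tl s)"
    unfolding paired_iff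
  proof (intro conjI allI impI)
    fix j assume j: "2*j+1 < length (tl s)"
    then have "2*j+2 < n" using ls by simp
    then show "tl s ! (2*j) = tl s ! (2*j+1)" using sn[of "2*j+1"] sn[of "2*j+2"] La j ls
      by (simp add: nth_tl)
  next
    assume o: "odd (length (tl s))"
    then have ev: "even n" using ls assms by simp
    have "tl s ! (length (tl s) - 1) = s ! (n-1)" using ls assms by (simp add: nth_tl Suc_diff_Suc)
    also have "\<not> \<dots>" using sn[of "n-1"] assms La ev by auto
    finally show "\<not> tl s ! (length (tl s) - 1)" .
  qed
  have "sg (tl s) = (\<Sum>j < (n-1) div 2. if a!(Suc j) then 1 else 0)"
    unfolding sg_sum
  proof (rule sum.cong)
    show "{..<length (tl s) div 2} = {..<(n - 1) div 2}" using ls by simp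
  next
    fix j assume "j \<in> {..<(n - 1) div 2}"
    then have "2*j+3 \<le> n" by auto
    then have "2*j+1 < n" "Suc j < (n+1) div 2" by auto
    then show "(if tl s ! (2 * j) then 1 else 0) = (if a ! Suc j then 1 else (0::nat))"
      using sn[of "2*j+1"] La ls by (simp add: nth_tl)
  qed
  also have "\<dots> = wt a - (if a ! 0 then 1 else 0)"
  proof -
    have "length a = Suc ((n-1) div 2)" using La assms by simp
    then show ?thesis unfolding wt_sum by (simp only: sum.lessThan_Suc_shift)
  qed
  finally have sgv: "sg (tl s) = wt a - (if a ! 0 then 1 else 0)" .
  have "fourier n (indS2 n) s = FF 1 (tl s) / 2^n"
    using fourier_eq[of s n] ls assms by (simp add: cube_def)
  also have "\<dots> = 2 ^ (n div 2) * (-1) ^ sg (tl s) / 2^n"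
    using pr ls assms by (simp add: FF1)
  also have "\<dots> = (2::real) powr (real (n div 2) - real n) * (-1) ^ (wt a - (if a ! 0 then 1 else 0))"
    by (simp add: sgv powr_diff powr_realpow)
  finally show "fourier n (indS2 n) (comb n a) = (2::real) powr (real (n div 2) - real n) * (-1) ^ (wt a - (if a ! 0 then 1 else 0))"
    by (simp add: s_def)
next
  fix s assume sc: "s \<in> cube n" and nv: "s \<notin> VB n"
  have ls: "length s = n" using sc by (simp add: cube_def)
  have "FF 1 (tl s) = 0"
  proof (rule ccontr)
    assume "FF 1 (tl s) \<noteq> 0"
    then have pr: "paired (tl s)" by (simp add: FF1 split: if_splits)
    have P1: "s!(2*i-1) = s!(2*i)" if "i \<ge> 1" "2*i < n" for i
    proof -
      have "2*(i-1)+1 < length (tl s)" using that ls by simp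
      then have "tl s ! (2*(i-1)) = tl s ! (2*(i-1)+1)" using pr unfolding paired_iff by blast
      moreover have "2*(i-1) + 1 = 2*i - 1" "2*(i-1)+1+1 = 2*i" using that by auto
      ultimately show ?thesis using that ls by (simp add: nth_tl)
    qed
    have P2: "\<not> s!(n-1)" if "even n"
    proof -
      have "odd (length (tl s))" using that ls assms by simp
      then have "\<not> tl s ! (length (tl s) - 1)" using pr unfolding paired_iff by blast
      moreover have "length (tl s) - 1 + 1 = n - 1" using ls assms by simp
      ultimately show ?thesis using ls assms by (simp add: nth_tl)
    qed
    define L where "L = (n+1) div 2"
    define a where "a = map (\<lambda>i. if i = 0 then s!0 else s!(2*i-1)) [0..<L]"
    have La: "length a = (n+1) div 2" by (simp add: a_def L_def)
    have "comb n a = s"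
    proof (rule nth_equalityI)
      show "length (comb n a) = length s" using ls by (simp add: comb_def)
    next
      fix j assume "j < length (comb n a)"
      then have j: "j < n" by (simp add: comb_def)
      show "comb n a ! j = s ! j"
      proof (cases "j = 0")
        case True
        then show ?thesis using comb_nth[OF j La] assms by (simp add: a_def L_def)
      next
        case False
        define i where "i = (j+1) div 2"
        have i1: "i \<ge> 1" using False by (simp add: i_def)
        show ?thesis
        proof (cases "i < L")
          case True
          have "a ! i = s!(2*i-1)" using True i1 by (simp add: a_def)
          moreover have "s!(2*i-1) = s!j"
          proof (cases "j = 2*i-1")
            case True then show ?thesis by simp
          next
            case False
            then have "j = 2*i" unfolding i_def by presburger
            then show ?thesis using P1[OF i1] j by simp
          qed
          ultimately show ?thesis using comb_nth[OF j La] \<open>j \<noteq> 0\<close> True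
            by (simp add: i_def L_def La)
        next
          case False
          then have "even n" "j = n - 1" using j unfolding i_def L_def by presburger+
          then show ?thesis using comb_nth[OF j La] \<open>j \<noteq> 0\<close> False P2
            by (simp add: i_def L_def La)
        qed
      qed
    qed
    moreover have "length a = halfc n" using La by (simp add: halfc_eq)
    ultimately have "s \<in> VB n" unfolding VB_def by blast
    then show False using nv by simp
  qed
  then show "fourier n (indS2 n) s = 0" using fourier_eq[OF sc] assms by simp
qed

end
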